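(* Fix $\delta>0$. Then $\lim_{l\to\infty}V_l^{\delta}=V^{\delta}$ on $\mathcal G_\delta\times[\underline{\lambda},\infty)$, and $\mathcal T(V^{\delta})(x_n^{\delta},\lambda)=V^{\delta}(x_n^{\delta},\lambda)$ for all $(x_n^\delta,\lambda)\in\mathcal G_\delta\times[\underline{\lambda},\infty)$.
   Context: Model: fix $p>0$, $q>0$, $d>0$, $\beta>0$, $\underline{\lambda}\ge0$ and distribution functions $F_U,F_Y$ of strictly positive random variables with finite expectation. For initial intensity $\lambda\ge\underline{\lambda}$, $\lambda_t=\underline{\lambda}+e^{-dt}(\lambda-\underline{\lambda})+\sum_{k=1}^{\widetilde N_t}Y_ke^{-d(t-T_k)}$ with $\widetilde N$ a rate-$\beta$ Poisson process (arrival times $T_k$) and $Y_k$ i.i.d. $\sim F_Y$ independent of $\widetilde N$; conditionally on $(\lambda_s)$, claims arrive as an inhomogeneous Poisson process $N_t$ with intensity $\lambda_t$, with i.i.d. sizes $U_j\sim F_U$ independent of everything else; surplus $X_t=x+pt-\sum_{j\le N_t}U_j$. The premium satisfies $p=(1+\eta)\mathbb E(U_1)\lambda_{\mathrm{av}}$, $\eta>0$, $\lambda_{\mathrm{av}}=\lim_t\mathbb E(\int_0^t\lambda_sds)/t$. Extended strategies: a pair $(L,\tau^F)$ with $L$ a dividend process (non-decreasing, càdlàg, adapted, $L_t\le X_t$ before ruin) and $\tau^F$ a stopping time at which all current surplus is paid and the business is closed; value $J((L,\tau^F);x,\lambda)=\mathbb E\big(\int_{0^-}^{\tau^L\wedge\tau^F}e^{-qt}dL_t+1_{\{\tau^F<\tau^L\}}e^{-q\tau^F}(X_{\tau^F}-L_{\tau^F})\big)$,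 $\tau^L=\inf\{t:X_t-L_{t^-}<0\}$. Discretization: for $\delta>0$, $\mathcal G_\delta=\{x_n^\delta=np\delta:n\ge0\}$, $\rho^\delta(x)=\max\{x_n^\delta\le x\}$. At state $(x_n^\delta,\lambda)$ let $\tau,U$ be the time until and size of the next claim, $T,Y$ the time until and size of the next intensity jump, $\lambda^c_t=\underline{\lambda}+e^{-dt}(\lambda-\underline{\lambda})$. Control actions: $\mathbf E_0$: pay nothing until $\delta\wedge\tau\wedge T$; if $\delta<\tau\wedge T$ new state $(x_{n+1}^\delta,\lambda^c_\delta)$; if $\tau\le\delta\wedge T$ and $y=x_n^\delta+p\tau-U<0$, ruin; if $y\ge0$ pay $y-\rho^\delta(y)$ and new state $(\rho^\delta(y),\lambda^c_\tau)$; if $T<\delta\wedge\tau$ pay $pT$ and new state $(x_n^\delta,\lambda^c_T+Y)$. $\mathbf E_1$ (only if $n\ge1$): pay $p\delta$, new state $(x_{n-1}^\delta,\lambda)$. $\mathbf E_F$: pay $x_n^\delta$ and close. $\widetilde\Pi^\delta_{x_n^\delta,\lambda}$: extended strategies obtained by finite or infinite sequences of these actions; $\widetilde\Pi^{\delta,l}_{x_n^\delta,\lambda}$: those obtained by a sequence of exactly $l$ control actions. $V^\delta(x_n^\delta,\lambda)=\sup_{\widetilde\Pi^\delta_{x_n^\delta,\lambda}}J$ and $V^\delta_l(x_n^\delta,\lambda)=\sup_{\widetilde\Pi^{\delta,l}_{x_n^\delta,\lambda}}J$. Operators on nonnegative Lebesgue measurable $w:\mathcal G_\delta\times[\underline{\lambda},\infty)\to[0,\infty)$: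 with $y=x_n^\delta+p\tau-U$, $\mathcal T_0(w)(x_n^\delta,\lambda)=\mathbb P(\delta\wedge T\wedge\tau=\delta)e^{-q\delta}w(x_{n+1}^\delta,\lambda^c_\delta)+\mathbb E\big(1_{\{\delta\wedge T\wedge\tau=\tau,\ y\ge0\}}e^{-q\tau}[w(\rho^\delta(y),\lambda^c_\tau)+y-\rho^\delta(y)]\big)+\mathbb E\big(1_{\{\delta\wedge T\wedge\tau=T\}}e^{-qT}[w(x_n^\delta,\lambda^c_T+Y)+pT]\big)$; $\mathcal T_1(w)(x_n^\delta,\lambda)=w(x_{n-1}^\delta,\lambda)+\delta p$ (for $n\ge1$); $\mathcal T_F(w)(x_n^\delta,\lambda)=x_n^\delta$; $\mathcal T=\max\{\mathcal T_0,\mathcal T_1,\mathcal T_F\}$ (with $\mathcal T_1$ omitted when $n=0$). *)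

theory Defs
  imports "HOL-Probability.Probability"
begin

text \<open>Parameters are always passed in the order  p q d beta ll delta MU MY,
  where ll is the lower intensity level, MU, MY the laws of claim sizes / intensity jumps.
  A grid point x_n = n p delta is represented by n :: nat.  A state is
  Some (n, lam) (surplus x_n, intensity lam) or None (business ruined or closed).\<close>

datatype action = E0 | E1 | EF | Stop

text \<open>Observation made during one step of action E0: (kind, time, size):
  kind 1 = a claim of size v at time t (t = tau <= delta and T);
  kind 2 = an intensity jump of size v at time t (t = T < delta and tau);
  any other kind (we use 0) = nothing happened up to time t = delta.\<close>
type_synonym obs = "nat \<times> real \<times> real"
type_synonym state = "(nat \<times> real) option"
type_synonym policy = "obs list \<Rightarrow> action"

text \<open>Deterministic intensity decay between jumps, and its integral.\<close>
definition lamc :: "real \<Rightarrow> real \<Rightarrow> real \<Rightarrow> real \<Rightarrow> real" where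
  "lamc d ll lam t = ll + exp (- d * t) * (lam - ll)"

definition Lamc :: "real \<Rightarrow> real \<Rightarrow> real \<Rightarrow> real \<Rightarrow> real" where
  "Lamc d ll lam t = (LBINT s=0..t. lamc d ll lam s)"

text \<open>Expectation of g(observation) for one step of E0 started with intensity lam:
  tau has hazard rate lamc, T is Exp(beta), independent, U ~ MU, Y ~ MY.\<close>
definition Estep :: "real \<Rightarrow> real \<Rightarrow> real \<Rightarrow> real \<Rightarrow> real measure \<Rightarrow> real measure
    \<Rightarrow> real \<Rightarrow> (obs \<Rightarrow> ennreal) \<Rightarrow> ennreal" where
  "Estep d beta ll delta MU MY lam g =
     ennreal (exp (- (beta * delta + Lamc d ll lam delta))) * g (0, delta, 0)
   + (\<integral>\<^sup>+ t. indicator {0..delta} t *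
        ennreal (lamc d ll lam t * exp (- (beta * t + Lamc d ll lam t)))
        * (\<integral>\<^sup>+ u. g (1, t, u) \<partial>MU) \<partial>lborel)
   + (\<integral>\<^sup>+ t. indicator {0..delta} t *
        ennreal (beta * exp (- (beta * t + Lamc d ll lam t)))
        * (\<integral>\<^sup>+ y. g (2, t, y) \<partial>MY) \<partial>lborel)"

text \<open>Index of rho^delta(y) = max grid point below y (for y >= 0).\<close>
definition rhoidx :: "real \<Rightarrow> real \<Rightarrow> real \<Rightarrow> nat" where
  "rhoidx p delta y = nat \<lfloor>y / (p * delta)\<rfloor>"

fun next0 :: "real \<Rightarrow> real \<Rightarrow> real \<Rightarrow> real \<Rightarrow> nat \<Rightarrow> real \<Rightarrow> obs \<Rightarrow> state" where
  "next0 p d ll delta n lam (k, t, v) =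
     (if k = 1 then
        (let y = real n * p * delta + p * t - v in
         if y < 0 then None else Some (rhoidx p delta y, lamc d ll lam t))
      else if k = 2 then Some (n, lamc d ll lam t + v)
      else Some (Suc n, lamc d ll lam delta))"

text \<open>Dividend paid (at the end of the step) during E0.\<close>
fun rew0 :: "real \<Rightarrow> real \<Rightarrow> nat \<Rightarrow> obs \<Rightarrow> real" where
  "rew0 p delta n (k, t, v) =
     (if k = 1 then
        (let y = real n * p * delta + p * t - v in
         if y < 0 then 0 else y - real (rhoidx p delta y) * p * delta)
      else if k = 2 then p * t
      else 0)"

fun disc0 :: "real \<Rightarrow> obs \<Rightarrow> real" where
  "disc0 q (k, t, v) = exp (- q * t)"

text \<open>Dummy observation recorded after the deterministic action E1.\<close>
definition dummy_obs :: obs where "dummy_obs = (3, 0, 0)"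

text \<open>Expected discounted dividends collected during the first l control actions of a
  (history dependent) policy.  Policies see the history of observations.\<close>
primrec Jval :: "real \<Rightarrow> real \<Rightarrow> real \<Rightarrow> real \<Rightarrow> real \<Rightarrow> real \<Rightarrow> real measure \<Rightarrow> real measure
    \<Rightarrow> nat \<Rightarrow> policy \<Rightarrow> state \<Rightarrow> ennreal" where
  "Jval p q d beta ll delta MU MY 0 = (\<lambda>pol s. 0)"
| "Jval p q d beta ll delta MU MY (Suc l) = (\<lambda>pol s.
     case s of None \<Rightarrow> 0
     | Some (n, lam) \<Rightarrow>
        (case pol [] of
           E0 \<Rightarrow> Estep d beta ll delta MU MY lam
                  (\<lambda>ob. ennreal (disc0 q ob) *
                     (ennreal (rew0 p delta n ob)
                      + Jval p q d beta ll delta MU MY l (\<lambda>h. pol (ob # h)) (next0 p d ll delta n lam ob)))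
         | E1 \<Rightarrow> (if 1 \<le> n then ennreal (p * delta)
                   + Jval p q d beta ll delta MU MY l (\<lambda>h. pol (dummy_obs # h)) (Some (n - 1, lam))
                  else 0)
         | EF \<Rightarrow> ennreal (real n * p * delta)
         | Stop \<Rightarrow> 0))"

text \<open>Admissibility during the first l actions: E1 only if n >= 1; Stop (i.e. the sequence of
  actions ends) only if allowed (finite sequences allowed for V, not for V_l).\<close>
primrec adm :: "real \<Rightarrow> real \<Rightarrow> real \<Rightarrow> real \<Rightarrow> bool \<Rightarrow> nat \<Rightarrow> policy \<Rightarrow> state \<Rightarrow> bool" where
  "adm p d ll delta stp 0 = (\<lambda>pol s. True)"
| "adm p d ll delta stp (Suc l) = (\<lambda>pol s.
     case s of None \<Rightarrow> True
     | Some (n, lam) \<Rightarrow>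
        (case pol [] of
           E0 \<Rightarrow> (\<forall>ob. adm p d ll delta stp l (\<lambda>h. pol (ob # h)) (next0 p d ll delta n lam ob))
         | E1 \<Rightarrow> 1 \<le> n \<and> adm p d ll delta stp l (\<lambda>h. pol (dummy_obs # h)) (Some (n - 1, lam))
         | EF \<Rightarrow> True
         | Stop \<Rightarrow> stp))"

text \<open>V^delta: finite or infinite sequences of actions; value of an infinite sequence is
  the (monotone) limit of the dividends of its first l actions.\<close>
definition Vdelta :: "real \<Rightarrow> real \<Rightarrow> real \<Rightarrow> real \<Rightarrow> real \<Rightarrow> real \<Rightarrow> real measure \<Rightarrow> real measure
    \<Rightarrow> nat \<Rightarrow> real \<Rightarrow> ennreal" where
  "Vdelta p q d beta ll delta MU MY n lam =
     (SUP pol \<in> {pol. \<forall>l. adm p d ll delta True l pol (Some (n, lam))}.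
        SUP l. Jval p q d beta ll delta MU MY l pol (Some (n, lam)))"

text \<open>V^delta_l: sequences of exactly l actions.\<close>
definition Vdelta_l :: "real \<Rightarrow> real \<Rightarrow> real \<Rightarrow> real \<Rightarrow> real \<Rightarrow> real \<Rightarrow> real measure \<Rightarrow> real measure
    \<Rightarrow> nat \<Rightarrow> nat \<Rightarrow> real \<Rightarrow> ennreal" where
  "Vdelta_l p q d beta ll delta MU MY l n lam =
     (SUP pol \<in> {pol. adm p d ll delta False l pol (Some (n, lam))}.
        Jval p q d beta ll delta MU MY l pol (Some (n, lam)))"

definition T0op :: "real \<Rightarrow> real \<Rightarrow> real \<Rightarrow> real \<Rightarrow> real \<Rightarrow> real \<Rightarrow> real measure \<Rightarrow> real measure
    \<Rightarrow> (nat \<Rightarrow> real \<Rightarrow> ennreal) \<Rightarrow> nat \<Rightarrow> real \<Rightarrow> ennreal" where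
  "T0op p q d beta ll delta MU MY w n lam =
     Estep d beta ll delta MU MY lam
       (\<lambda>ob. ennreal (disc0 q ob) *
          (ennreal (rew0 p delta n ob)
           + (case next0 p d ll delta n lam ob of None \<Rightarrow> 0 | Some (m, l) \<Rightarrow> w m l)))"

definition T1op :: "real \<Rightarrow> real \<Rightarrow> (nat \<Rightarrow> real \<Rightarrow> ennreal) \<Rightarrow> nat \<Rightarrow> real \<Rightarrow> ennreal" where
  "T1op p delta w n lam = w (n - 1) lam + ennreal (delta * p)"

definition TFop :: "real \<Rightarrow> real \<Rightarrow> nat \<Rightarrow> ennreal" where
  "TFop p delta n = ennreal (real n * p * delta)"

definition Top :: "real \<Rightarrow> real \<Rightarrow> real \<Rightarrow> real \<Rightarrow> real \<Rightarrow> real \<Rightarrow> real measure \<Rightarrow> real measure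
    \<Rightarrow> (nat \<Rightarrow> real \<Rightarrow> ennreal) \<Rightarrow> nat \<Rightarrow> real \<Rightarrow> ennreal" where
  "Top p q d beta ll delta MU MY w n lam =
     (if n = 0 then max (T0op p q d beta ll delta MU MY w n lam) (TFop p delta n)
      else max (max (T0op p q d beta ll delta MU MY w n lam) (T1op p delta w n lam)) (TFop p delta n))"

end

theory Submission
  imports Defs
begin

context fixes p q d beta ll delta :: real and MU MY :: "real measure"
begin

abbreviation "J \<equiv> Jval p q d beta ll delta MU MY"
abbreviation "AD \<equiv> adm p d ll delta"

lemma Jval_None[simp]: "J l pol None = 0" by (cases l) auto
lemma adm_None[simp]: "AD stp l pol None" by (cases l) auto

lemma J_Suc: "J (Suc l) pol (Some (n, lam)) = (case pol [] of
           E0 \<Rightarrow> Estep d beta ll delta MU MY lam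
                  (\<lambda>ob. ennreal (disc0 q ob) *
                     (ennreal (rew0 p delta n ob)
                      + J l (\<lambda>h. pol (ob # h)) (next0 p d ll delta n lam ob)))
         | E1 \<Rightarrow> (if 1 \<le> n then ennreal (p * delta)
                   + J l (\<lambda>h. pol (dummy_obs # h)) (Some (n - 1, lam))
                  else 0)
         | EF \<Rightarrow> ennreal (real n * p * delta)
         | Stop \<Rightarrow> 0)" by simp

lemma AD_Suc: "AD stp (Suc l) pol (Some (n, lam)) = (case pol [] of
           E0 \<Rightarrow> (\<forall>ob. AD stp l (\<lambda>h. pol (ob # h)) (next0 p d ll delta n lam ob))
         | E1 \<Rightarrow> 1 \<le> n \<and> AD stp l (\<lambda>h. pol (dummy_obs # h)) (Some (n - 1, lam))
         | EF \<Rightarrow> True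
         | Stop \<Rightarrow> stp)" by simp

declare Jval.simps(2)[simp del] adm.simps(2)[simp del] next0.simps[simp del]

lemma opt_cases: "(s = None \<Longrightarrow> P) \<Longrightarrow> (\<And>n lam. s = Some (n, lam) \<Longrightarrow> P) \<Longrightarrow> P"
  by (cases s) auto

lemma Estep_mono: "(\<And>ob. g ob \<le> h ob) \<Longrightarrow> Estep d beta ll delta MU MY lam g \<le> Estep d beta ll delta MU MY lam h"
  unfolding Estep_def by (intro add_mono mult_left_mono nn_integral_mono) auto

lemma Jval_mono_l: "J l pol s \<le> J (Suc l) pol s"
proof (induction l arbitrary: pol s)
  case 0 then show ?case by simp
next
  case (Suc l)
  show ?case
  proof (rule opt_cases[of s])
    fix n lam assume s: "s = Some (n, lam)"
    show ?thesis
    proof (cases "pol []")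
      case E0 then show ?thesis unfolding s
        by (simp only: J_Suc[of "Suc l" pol n lam] J_Suc[of l pol n lam] E0 action.case,
            intro Estep_mono mult_left_mono add_left_mono Suc.IH; simp)
    next
      case E1 then show ?thesis unfolding s using Suc.IH
        by (simp only: J_Suc[of "Suc l" pol n lam] J_Suc[of l pol n lam] E1 action.case) (simp add: add_left_mono)
    qed (auto simp: s J_Suc)
  qed simp
qed

lemma Jval_agree: "(\<forall>h. length h < l \<longrightarrow> pol' h = pol h) \<Longrightarrow> J l pol' s = J l pol s"
proof (induction l arbitrary: pol pol' s)
  case 0 then show ?case by simp
next
  case (Suc l)
  have h0: "pol' [] = pol []" using Suc.prems by auto
  have sh: "\<And>ob. J l (\<lambda>h. pol' (ob # h)) = J l (\<lambda>h. pol (ob # h))"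
    using Suc by (intro ext Suc.IH) auto
  show ?case by (rule opt_cases[of s]) (simp_all add: J_Suc h0 sh split: action.split)
qed

lemma adm_agree: "(\<forall>h. length h < l \<longrightarrow> pol' h = pol h) \<Longrightarrow> AD stp l pol' s = AD stp l pol s"
proof (induction l arbitrary: pol pol' s)
  case 0 then show ?case by simp
next
  case (Suc l)
  have h0: "pol' [] = pol []" using Suc.prems by auto
  have sh: "\<And>ob. AD stp l (\<lambda>h. pol' (ob # h)) = AD stp l (\<lambda>h. pol (ob # h))"
    using Suc by (intro ext Suc.IH) auto
  show ?case by (rule opt_cases[of s]) (simp_all add: AD_Suc h0 sh split: action.split)
qed

definition fx :: "policy \<Rightarrow> policy" where "fx pol = (\<lambda>h. if pol h = Stop then EF else pol h)"

lemma fx_sh: "(\<lambda>h. fx pol (ob # h)) = fx (\<lambda>h. pol (ob # h))" by (simp add: fx_def)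

lemma Jval_fx: "J l pol s \<le> J l (fx pol) s"
proof (induction l arbitrary: pol s)
  case 0 then show ?case by simp
next
  case (Suc l)
  show ?case
  proof (rule opt_cases[of s])
    fix n lam assume s: "s = Some (n, lam)"
    show ?thesis
    proof (cases "pol []")
      case E0
      then have f: "fx pol [] = E0" by (simp add: fx_def)
      show ?thesis unfolding s
        by (simp only: J_Suc[of l pol n lam] J_Suc[of l "fx pol" n lam] E0 f action.case fx_sh,
            intro Estep_mono mult_left_mono add_left_mono Suc.IH; simp)
    next
      case E1
      then have f: "fx pol [] = E1" by (simp add: fx_def)
      show ?thesis unfolding s using Suc.IH
        by (simp only: J_Suc[of l pol n lam] J_Suc[of l "fx pol" n lam] E1 f action.case fx_sh) (simp add: add_left_mono)
    qed (auto simp: s J_Suc fx_def)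
  qed simp
qed

lemma adm_fx: "AD stp l pol s \<Longrightarrow> AD False l (fx pol) s"
proof (induction l arbitrary: pol s)
  case 0 then show ?case by simp
next
  case (Suc l)
  show ?case
  proof (rule opt_cases[of s])
    fix n lam assume s: "s = Some (n, lam)"
    show ?thesis
    proof (cases "pol []")
      case E0
      then have f: "fx pol [] = E0" by (simp add: fx_def)
      show ?thesis using Suc.prems Suc.IH unfolding s
        by (simp only: AD_Suc[of _ l pol n lam] AD_Suc[of _ l "fx pol" n lam] E0 f action.case fx_sh) blast
    next
      case E1
      then have f: "fx pol [] = E1" by (simp add: fx_def)
      show ?thesis using Suc.prems Suc.IH unfolding s
        by (simp only: AD_Suc[of _ l pol n lam] AD_Suc[of _ l "fx pol" n lam] E1 f action.case fx_sh)
    next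
      case EF
      then have f: "fx pol [] = EF" by (simp add: fx_def)
      show ?thesis unfolding s
        by (simp only: AD_Suc[of _ l "fx pol" n lam] f action.case)
    next
      case Stop
      then have f: "fx pol [] = EF" by (simp add: fx_def)
      show ?thesis unfolding s
        by (simp only: AD_Suc[of _ l "fx pol" n lam] f action.case)
    qed
  qed simp
qed

lemma adm_Suc_D: "AD stp (Suc l) pol s \<Longrightarrow> AD stp l pol s"
proof (induction l arbitrary: pol s)
  case 0 then show ?case by simp
next
  case (Suc l)
  show ?case
  proof (rule opt_cases[of s])
    fix n lam assume s: "s = Some (n, lam)"
    show ?thesis using Suc.prems Suc.IH unfolding s
      by (cases "pol []") (simp_all only: AD_Suc[of _ l pol n lam] AD_Suc[of _ "Suc l" pol n lam] action.case, blast+)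
  qed simp
qed

lemma adm_le: "AD stp l pol s \<Longrightarrow> k \<le> l \<Longrightarrow> AD stp k pol s"
proof (induction l)
  case 0 then show ?case by simp
next
  case (Suc l) then show ?case
    by (cases "k = Suc l") (auto dest: adm_Suc_D)
qed

lemma adm_FT: "AD False l pol s \<Longrightarrow> AD True l pol s"
proof (induction l arbitrary: pol s)
  case 0 then show ?case by simp
next
  case (Suc l)
  show ?case
  proof (rule opt_cases[of s])
    fix n lam assume s: "s = Some (n, lam)"
    show ?thesis using Suc.prems Suc.IH unfolding s
      by (cases "pol []") (simp_all only: AD_Suc[of _ l pol n lam] action.case, blast+)
  qed simp
qed

lemma adm_EF: "AD stp l pol s \<Longrightarrow> (\<forall>h. length h = l \<longrightarrow> pol h = EF) \<Longrightarrow> AD stp (Suc l) pol s"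
proof (induction l arbitrary: pol s)
  case 0
  show ?case
  proof (rule opt_cases[of s])
    fix n lam assume s: "s = Some (n, lam)"
    have "pol [] = EF" using 0 by auto
    then show ?thesis unfolding s by (simp add: AD_Suc)
  qed simp
next
  case (Suc l)
  show ?case
  proof (rule opt_cases[of s])
    fix n lam assume s: "s = Some (n, lam)"
    have h0: "pol [] \<noteq> EF \<Longrightarrow> True" by simp
    have sh: "\<And>ob. \<forall>h. length h = l \<longrightarrow> pol (ob # h) = EF" using Suc.prems(2) by auto
    show ?thesis using Suc.prems(1) Suc.IH sh unfolding s
      by (cases "pol []") (simp_all only: AD_Suc[of _ l pol n lam] AD_Suc[of _ "Suc l" pol n lam] action.case, blast+)
  qed simp
qed

lemma adm_Stop: "AD True l pol s \<Longrightarrow> (\<forall>h. length h \<ge> l \<longrightarrow> pol h = Stop) \<Longrightarrow> AD True (l + j) pol s"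
proof (induction l arbitrary: pol s)
  case 0
  show ?case
  proof (rule opt_cases[of s])
    fix n lam assume s: "s = Some (n, lam)"
    have "pol [] = Stop" using 0 by auto
    then show ?thesis unfolding s by (cases j) (simp_all add: AD_Suc)
  qed simp
next
  case (Suc l)
  show ?case
  proof (rule opt_cases[of s])
    fix n lam assume s: "s = Some (n, lam)"
    have sh: "\<And>ob. \<forall>h. length h \<ge> l \<longrightarrow> pol (ob # h) = Stop" using Suc.prems(2) by auto
    show ?thesis using Suc.prems(1) Suc.IH sh unfolding s add_Suc
      by (cases "pol []") (simp_all only: AD_Suc[of _ l pol n lam] AD_Suc[of _ "l + j" pol n lam] action.case, blast+)
  qed simp
qed

end

context fixes p q d beta ll delta :: real and MU MY :: "real measure"
begin

abbreviation "V \<equiv> Vdelta p q d beta ll delta MU MY"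
abbreviation "W \<equiv> Vdelta_l p q d beta ll delta MU MY"

lemma W_le_V: "W l n lam \<le> V n lam"
  unfolding Vdelta_l_def
proof (rule SUP_least)
  fix pol assume "pol \<in> {pol. AD p d ll delta False l pol (Some (n, lam))}"
  then have a: "AD p d ll delta False l pol (Some (n, lam))" by simp
  define pol' where "pol' = (\<lambda>h. if length h < l then pol h else Stop)"
  have ag: "\<forall>h. length h < l \<longrightarrow> pol' h = pol h" unfolding pol'_def by simp
  have a': "AD p d ll delta True l pol' (Some (n, lam))"
    using adm_FT[OF a] adm_agree[OF ag] by simp
  have "AD p d ll delta True k pol' (Some (n, lam))" for k
  proof (cases "k \<le> l")
    case True then show ?thesis using adm_le[OF a'] by simp
  next
    case False
    have "AD p d ll delta True (l + (k - l)) pol' (Some (n, lam))"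
      by (rule adm_Stop[OF a']) (auto simp: pol'_def)
    then show ?thesis using False by simp
  qed
  then have mem: "pol' \<in> {pol. \<forall>l. AD p d ll delta True l pol (Some (n, lam))}" by simp
  have "J p q d beta ll delta MU MY l pol (Some (n, lam)) = J p q d beta ll delta MU MY l pol' (Some (n, lam))"
    using Jval_agree[OF ag] by simp
  also have "\<dots> \<le> (SUP l. J p q d beta ll delta MU MY l pol' (Some (n, lam)))" by (rule SUP_upper) simp
  also have "\<dots> \<le> V n lam" unfolding Vdelta_def by (rule SUP_upper[OF mem])
  finally show "J p q d beta ll delta MU MY l pol (Some (n, lam)) \<le> V n lam" .
qed

lemma V_le_SUPW: "V n lam \<le> (SUP l. W l n lam)"
  unfolding Vdelta_def
proof (intro SUP_least)
  fix pol l assume "pol \<in> {pol. \<forall>l. AD p d ll delta True l pol (Some (n, lam))}"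
  then have a: "AD p d ll delta True l pol (Some (n, lam))" by simp
  have "J p q d beta ll delta MU MY l pol (Some (n, lam)) \<le> J p q d beta ll delta MU MY l (fx pol) (Some (n, lam))"
    by (rule Jval_fx)
  also have "\<dots> \<le> W l n lam" unfolding Vdelta_l_def
    by (rule SUP_upper) (simp add: adm_fx[OF a])
  also have "\<dots> \<le> (SUP l. W l n lam)" by (rule SUP_upper) simp
  finally show "J p q d beta ll delta MU MY l pol (Some (n, lam)) \<le> (SUP l. W l n lam)" .
qed

lemma V_eq_SUPW: "V n lam = (SUP l. W l n lam)"
  by (intro antisym V_le_SUPW SUP_least W_le_V)

lemma W_mono: "W l n lam \<le> W (Suc l) n lam"
  unfolding Vdelta_l_def
proof (rule SUP_least)
  fix pol assume "pol \<in> {pol. AD p d ll delta False l pol (Some (n, lam))}"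
  then have a: "AD p d ll delta False l pol (Some (n, lam))" by simp
  define pol' where "pol' = (\<lambda>h. if length h < l then pol h else EF)"
  have ag: "\<forall>h. length h < l \<longrightarrow> pol' h = pol h" unfolding pol'_def by simp
  have a': "AD p d ll delta False (Suc l) pol' (Some (n, lam))"
    using adm_agree[OF ag] a by (intro adm_EF) (auto simp: pol'_def)
  have "J p q d beta ll delta MU MY l pol (Some (n, lam)) = J p q d beta ll delta MU MY l pol' (Some (n, lam))"
    using Jval_agree[OF ag] by simp
  also have "\<dots> \<le> J p q d beta ll delta MU MY (Suc l) pol' (Some (n, lam))" by (rule Jval_mono_l)
  also have "\<dots> \<le> (SUP pol\<in>{pol. AD p d ll delta False (Suc l) pol (Some (n, lam))}. J p q d beta ll delta MU MY (Suc l) pol (Some (n, lam)))"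
    by (rule SUP_upper) (simp add: a')
  finally show "J p q d beta ll delta MU MY l pol (Some (n, lam)) \<le> \<dots>" .
qed

lemma W_incseq: "incseq (\<lambda>l. W l n lam)"
  by (rule incseq_SucI) (rule W_mono)

lemma claim1: "(\<lambda>l. W l n lam) \<longlonglongrightarrow> V n lam"
  unfolding V_eq_SUPW by (rule LIMSEQ_SUP[OF W_incseq])

end

lemma Lamc_eq:
  fixes d ll lam t :: real assumes d: "d > 0"
  shows "Lamc d ll lam t = ll * t + (lam - ll) * (1 - exp (- d * t)) / d"
proof -
  define F where "F s = ll * s - (lam - ll) * exp (- d * s) / d" for s
  have "(LBINT s=ereal 0..ereal t. lamc d ll lam s) = F t - F 0"
  proof (rule interval_integral_FTC_finite)
    show "continuous_on {min 0 t..max 0 t} (lamc d ll lam)"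
      unfolding lamc_def by (intro continuous_intros)
    fix x
    have "((\<lambda>s. ll * s - (lam - ll) * exp (- d * s) / d) has_real_derivative
          (ll * 1 - (lam - ll) * (exp (- d * x) * (- d * 1)) / d)) (at x)"
      using d by (intro derivative_eq_intros) auto
    moreover have "ll * 1 - (lam - ll) * (exp (- d * x) * (- d * 1)) / d = lamc d ll lam x"
      using d by (simp add: lamc_def field_simps)
    ultimately have "(F has_real_derivative lamc d ll lam x) (at x)" unfolding F_def by simp
    then show "(F has_vector_derivative lamc d ll lam x) (at x within {min 0 t..max 0 t})"
      by (simp add: has_real_derivative_iff_has_vector_derivative has_vector_derivative_at_within)
  qed
  then have "Lamc d ll lam t = F t - F 0" unfolding Lamc_def by (simp add: zero_ereal_def)
  also have "\<dots> = ll * t + (lam - ll) * (1 - exp (- d * t)) / d"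
    unfolding F_def using d by (simp add: field_simps)
  finally show ?thesis .
qed

lemma int_SUP:
  fixes f :: "nat \<Rightarrow> real \<Rightarrow> real \<Rightarrow> ennreal" and a :: "real \<Rightarrow> ennreal"
  assumes sf: "sigma_finite_measure M"
    and inc: "\<And>t u. incseq (\<lambda>k. f k t u)"
    and m: "\<And>k. (\<lambda>(t, u). f k t u) \<in> borel_measurable (lborel \<Otimes>\<^sub>M M)"
    and a: "a \<in> borel_measurable borel"
  shows "(\<integral>\<^sup>+t. a t * (\<integral>\<^sup>+u. (SUP k. f k t u) \<partial>M) \<partial>lborel) = (SUP k. \<integral>\<^sup>+t. a t * (\<integral>\<^sup>+u. f k t u \<partial>M) \<partial>lborel)"
    and "incseq (\<lambda>k. \<integral>\<^sup>+t. a t * (\<integral>\<^sup>+u. f k t u \<partial>M) \<partial>lborel)"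
proof -
  have mi: "(\<lambda>u. f k t u) \<in> borel_measurable M" for k t
    using measurable_Pair2[OF m[of k], of t] by simp
  have inner: "(\<integral>\<^sup>+u. (SUP k. f k t u) \<partial>M) = (SUP k. \<integral>\<^sup>+u. f k t u \<partial>M)" for t
    by (rule nn_integral_monotone_convergence_SUP) (use inc mi in \<open>auto simp: incseq_def le_fun_def\<close>)
  have mt: "(\<lambda>t. a t * (\<integral>\<^sup>+u. f k t u \<partial>M)) \<in> borel_measurable lborel" for k
  proof -
    have "(\<lambda>t. \<integral>\<^sup>+u. f k t u \<partial>M) \<in> borel_measurable lborel"
      by (rule sigma_finite_measure.borel_measurable_nn_integral[OF sf]) (use m[of k] in simp)
    then show ?thesis using a by simp
  qed
  have incI: "incseq (\<lambda>k t. a t * (\<integral>\<^sup>+u. f k t u \<partial>M))"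
    unfolding incseq_def le_fun_def
    by (intro allI impI mult_left_mono nn_integral_mono) (use inc in \<open>auto simp: incseq_def\<close>)
  have "(\<integral>\<^sup>+t. a t * (\<integral>\<^sup>+u. (SUP k. f k t u) \<partial>M) \<partial>lborel) = (\<integral>\<^sup>+t. (SUP k. a t * (\<integral>\<^sup>+u. f k t u \<partial>M)) \<partial>lborel)"
    by (simp add: inner SUP_mult_left_ennreal)
  also have "\<dots> = (SUP k. \<integral>\<^sup>+t. a t * (\<integral>\<^sup>+u. f k t u \<partial>M) \<partial>lborel)"
    by (rule nn_integral_monotone_convergence_SUP[OF incI mt])
  finally show "(\<integral>\<^sup>+t. a t * (\<integral>\<^sup>+u. (SUP k. f k t u) \<partial>M) \<partial>lborel) = (SUP k. \<integral>\<^sup>+t. a t * (\<integral>\<^sup>+u. f k t u \<partial>M) \<partial>lborel)" .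
  show "incseq (\<lambda>k. \<integral>\<^sup>+t. a t * (\<integral>\<^sup>+u. f k t u \<partial>M) \<partial>lborel)"
    using incI unfolding incseq_def le_fun_def by (auto intro!: nn_integral_mono)
qed

lemma Estep_SUP:
  fixes g :: "nat \<Rightarrow> obs \<Rightarrow> ennreal"
  assumes d: "d > 0" and sfU: "sigma_finite_measure MU" and sfY: "sigma_finite_measure MY"
    and inc: "\<And>ob. incseq (\<lambda>k. g k ob)"
    and m1: "\<And>k. (\<lambda>(t, u). g k (1, t, u)) \<in> borel_measurable (lborel \<Otimes>\<^sub>M MU)"
    and m2: "\<And>k. (\<lambda>(t, y). g k (2, t, y)) \<in> borel_measurable (lborel \<Otimes>\<^sub>M MY)"
  shows "Estep d beta ll delta MU MY lam (\<lambda>ob. SUP k. g k ob) = (SUP k. Estep d beta ll delta MU MY lam (g k))"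
proof -
  have Lm[measurable]: "(\<lambda>t. Lamc d ll lam t) \<in> borel_measurable borel" unfolding Lamc_eq[OF d] by measurable
  have lm[measurable]: "(\<lambda>t. lamc d ll lam t) \<in> borel_measurable borel" unfolding lamc_def by measurable
  define A where "A k = ennreal (exp (- (beta * delta + Lamc d ll lam delta))) * g k (0, delta, 0)" for k
  define B where "B k = (\<integral>\<^sup>+ t. indicator {0..delta} t *
        ennreal (lamc d ll lam t * exp (- (beta * t + Lamc d ll lam t)))
        * (\<integral>\<^sup>+ u. g k (1, t, u) \<partial>MU) \<partial>lborel)" for k
  define C where "C k = (\<integral>\<^sup>+ t. indicator {0..delta} t *
        ennreal (beta * exp (- (beta * t + Lamc d ll lam t)))
        * (\<integral>\<^sup>+ y. g k (2, t, y) \<partial>MY) \<partial>lborel)" for k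
  have B: "(\<integral>\<^sup>+ t. indicator {0..delta} t *
        ennreal (lamc d ll lam t * exp (- (beta * t + Lamc d ll lam t)))
        * (\<integral>\<^sup>+ u. (SUP k. g k (1, t, u)) \<partial>MU) \<partial>lborel) = (SUP k. B k)" "incseq B"
    unfolding B_def
    subgoal by (rule int_SUP(1)[OF sfU _ m1, where a="\<lambda>t. indicator {0..delta} t *
        ennreal (lamc d ll lam t * exp (- (beta * t + Lamc d ll lam t)))"]) (use inc in auto)
    subgoal by (rule int_SUP(2)[OF sfU _ m1, where a="\<lambda>t. indicator {0..delta} t *
        ennreal (lamc d ll lam t * exp (- (beta * t + Lamc d ll lam t)))"]) (use inc in auto)
    done
  have C: "(\<integral>\<^sup>+ t. indicator {0..delta} t *
        ennreal (beta * exp (- (beta * t + Lamc d ll lam t)))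
        * (\<integral>\<^sup>+ y. (SUP k. g k (2, t, y)) \<partial>MY) \<partial>lborel) = (SUP k. C k)" "incseq C"
    unfolding C_def
    subgoal by (rule int_SUP(1)[OF sfY _ m2, where a="\<lambda>t. indicator {0..delta} t *
        ennreal (beta * exp (- (beta * t + Lamc d ll lam t)))"]) (use inc in auto)
    subgoal by (rule int_SUP(2)[OF sfY _ m2, where a="\<lambda>t. indicator {0..delta} t *
        ennreal (beta * exp (- (beta * t + Lamc d ll lam t)))"]) (use inc in auto)
    done
  have A: "ennreal (exp (- (beta * delta + Lamc d ll lam delta))) * (SUP k. g k (0, delta, 0)) = (SUP k. A k)"
    "incseq A"
    unfolding A_def using inc by (auto simp: SUP_mult_left_ennreal incseq_def intro: mult_left_mono)
  have AB: "incseq (\<lambda>k. A k + B k)" using A(2) B(2) by (auto simp: incseq_def intro: add_mono)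
  have "Estep d beta ll delta MU MY lam (\<lambda>ob. SUP k. g k ob) = (SUP k. A k) + (SUP k. B k) + (SUP k. C k)"
    unfolding Estep_def A(1)[symmetric] B(1)[symmetric] C(1)[symmetric] by simp
  also have "\<dots> = (SUP k. A k + B k + C k)"
    using ennreal_SUP_add[OF A(2) B(2)] ennreal_SUP_add[OF AB C(2)] by simp
  also have "\<dots> = (SUP k. Estep d beta ll delta MU MY lam (g k))"
    unfolding Estep_def A_def B_def C_def by simp
  finally show ?thesis .
qed

context fixes p q d beta ll delta :: real and MU MY :: "real measure"
begin

definition gW :: "(nat \<Rightarrow> real \<Rightarrow> ennreal) \<Rightarrow> nat \<Rightarrow> real \<Rightarrow> obs \<Rightarrow> ennreal" where
  "gW Wf n lam ob = ennreal (disc0 q ob) *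
          (ennreal (rew0 p delta n ob)
           + (case next0 p d ll delta n lam ob of None \<Rightarrow> 0 | Some (m, l) \<Rightarrow> Wf m l))"

lemma T0op_gW: "T0op p q d beta ll delta MU MY Wf n lam = Estep d beta ll delta MU MY lam (gW Wf n lam)"
  unfolding T0op_def gW_def ..

lemma gW_1: "gW Wf n lam (1, t, u) = ennreal (exp (- q * t)) *
   (ennreal (if real n * p * delta + p * t - u < 0 then 0 else (real n * p * delta + p * t - u) - real (rhoidx p delta (real n * p * delta + p * t - u)) * p * delta)
    + (if real n * p * delta + p * t - u < 0 then 0 else Wf (rhoidx p delta (real n * p * delta + p * t - u)) (lamc d ll lam t)))"
  by (simp add: gW_def next0.simps Let_def)

lemma gW_2: "gW Wf n lam (2, t, y) = ennreal (exp (- q * t)) * (ennreal (p * t) + Wf n (lamc d ll lam t + y))"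
  by (simp add: gW_def next0.simps)

lemma gW_0: "gW Wf n lam (0, t, v) = ennreal (exp (- q * t)) * Wf (Suc n) (lamc d ll lam delta)"
  by (simp add: gW_def next0.simps)

lemma gW1_meas:
  assumes Wm: "\<And>m. Wf m \<in> borel_measurable borel"
    and [measurable]: "L \<in> borel_measurable M" "T \<in> borel_measurable M" "U \<in> borel_measurable M"
  shows "(\<lambda>x. gW Wf n (L x) (1, T x, U x)) \<in> borel_measurable M"
proof -
  have g: "(\<lambda>x. rhoidx p delta (real n * p * delta + p * T x - U x)) \<in> M \<rightarrow>\<^sub>M count_space UNIV"
    unfolding rhoidx_def by measurable
  have [measurable]: "(\<lambda>x. Wf (rhoidx p delta (real n * p * delta + p * T x - U x)) (lamc d ll (L x) (T x))) \<in> borel_measurable M"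
  proof (rule measurable_compose_countable[OF _ g])
    fix i
    have "(\<lambda>x. lamc d ll (L x) (T x)) \<in> borel_measurable M" unfolding lamc_def by measurable
    then show "(\<lambda>x. Wf i (lamc d ll (L x) (T x))) \<in> borel_measurable M"
      by (rule measurable_compose[OF _ Wm])
  qed
  have [measurable]: "(\<lambda>x. real (rhoidx p delta (real n * p * delta + p * T x - U x))) \<in> borel_measurable M"
    unfolding rhoidx_def by measurable
  show ?thesis unfolding gW_1 by measurable
qed

lemma gW2_meas:
  assumes Wm: "\<And>m. Wf m \<in> borel_measurable borel"
    and [measurable]: "L \<in> borel_measurable M" "T \<in> borel_measurable M" "U \<in> borel_measurable M"
  shows "(\<lambda>x. gW Wf n (L x) (2, T x, U x)) \<in> borel_measurable M"
proof -
  have [measurable]: "(\<lambda>x. Wf n (lamc d ll (L x) (T x) + U x)) \<in> borel_measurable M"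
  proof -
    have "(\<lambda>x. lamc d ll (L x) (T x) + U x) \<in> borel_measurable M" unfolding lamc_def by measurable
    then show ?thesis by (rule measurable_compose[OF _ Wm])
  qed
  show ?thesis unfolding gW_2 by measurable
qed

lemma gW_mono: "(\<And>m l. W1 m l \<le> W2 m l) \<Longrightarrow> gW W1 n lam ob \<le> gW W2 n lam ob"
  unfolding gW_def by (intro mult_left_mono add_left_mono) (auto split: option.splits)

lemma T0op_mono: "(\<And>m l. W1 m l \<le> W2 m l) \<Longrightarrow> T0op p q d beta ll delta MU MY W1 n lam \<le> T0op p q d beta ll delta MU MY W2 n lam"
  unfolding T0op_gW by (intro Estep_mono gW_mono)

lemma Top_mono: "(\<And>m l. W1 m l \<le> W2 m l) \<Longrightarrow> Top p q d beta ll delta MU MY W1 n lam \<le> Top p q d beta ll delta MU MY W2 n lam"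
proof -
  assume h: "\<And>m l. W1 m l \<le> W2 m l"
  have a: "T0op p q d beta ll delta MU MY W1 n lam \<le> T0op p q d beta ll delta MU MY W2 n lam"
    by (rule T0op_mono[OF h])
  have b: "W1 (n - 1) lam + ennreal (delta * p) \<le> W2 (n - 1) lam + ennreal (delta * p)"
    by (rule add_right_mono[OF h])
  have c1: "max (max (T0op p q d beta ll delta MU MY W1 n lam) (W1 (n - 1) lam + ennreal (delta * p))) (TFop p delta n)
     \<le> max (max (T0op p q d beta ll delta MU MY W2 n lam) (W2 (n - 1) lam + ennreal (delta * p))) (TFop p delta n)"
    by (intro max.mono a b order.refl)
  have c2: "max (T0op p q d beta ll delta MU MY W1 n lam) (TFop p delta n)
     \<le> max (T0op p q d beta ll delta MU MY W2 n lam) (TFop p delta n)"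
    by (intro max.mono a b order.refl)
  show ?thesis unfolding Top_def T1op_def using c1 c2 by (cases "n = 0") (simp_all only: if_True if_False refl simp_thms)
qed

lemma gW_SUP: "gW (\<lambda>m l. SUP k. Wk k m l) n lam ob = (SUP k. gW (Wk k) n lam ob)"
  unfolding gW_def by (auto split: option.splits simp: ennreal_SUP_add_right SUP_mult_left_ennreal)

context
  assumes d: "d > 0" and MU: "prob_space MU" "sets MU = sets borel"
    and MY: "prob_space MY" "sets MY = sets borel"
begin

lemma sfU: "sigma_finite_measure MU"
  using MU(1) by (simp add: prob_space_imp_sigma_finite)
lemma sfY: "sigma_finite_measure MY"
  using MY(1) by (simp add: prob_space_imp_sigma_finite)

lemma sndU[measurable]: "snd \<in> borel_measurable (N \<Otimes>\<^sub>M MU)"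
  using measurable_compose[OF measurable_snd[of N MU] measurable_ident_sets[OF MU(2)]] by simp
lemma sndY[measurable]: "snd \<in> borel_measurable (N \<Otimes>\<^sub>M MY)"
  using measurable_compose[OF measurable_snd[of N MY] measurable_ident_sets[OF MY(2)]] by simp

lemma T0op_SUP:
  assumes Wm: "\<And>k m. Wk k m \<in> borel_measurable borel" and inc: "\<And>m lam. incseq (\<lambda>k. Wk k m lam)"
  shows "T0op p q d beta ll delta MU MY (\<lambda>m lam. SUP k. Wk k m lam) n lam = (SUP k. T0op p q d beta ll delta MU MY (Wk k) n lam)"
proof -
  have "T0op p q d beta ll delta MU MY (\<lambda>m lam. SUP k. Wk k m lam) n lam
      = Estep d beta ll delta MU MY lam (\<lambda>ob. SUP k. gW (Wk k) n lam ob)"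
    unfolding T0op_gW gW_SUP ..
  also have "\<dots> = (SUP k. Estep d beta ll delta MU MY lam (gW (Wk k) n lam))"
  proof (rule Estep_SUP[OF d sfU sfY])
    show "incseq (\<lambda>k. gW (Wk k) n lam ob)" for ob
      using inc by (auto simp: incseq_def intro!: gW_mono)
    show "(\<lambda>(t, u). gW (Wk k) n lam (1, t, u)) \<in> borel_measurable (lborel \<Otimes>\<^sub>M MU)" for k
      using gW1_meas[where Wf="Wk k" and L="\<lambda>x. lam" and M="lborel \<Otimes>\<^sub>M MU" and T=fst and U=snd and n=n, OF Wm] by (simp add: split_beta')
    show "(\<lambda>(t, u). gW (Wk k) n lam (2, t, u)) \<in> borel_measurable (lborel \<Otimes>\<^sub>M MY)" for k
      using gW2_meas[where Wf="Wk k" and L="\<lambda>x. lam" and M="lborel \<Otimes>\<^sub>M MY" and T=fst and U=snd and n=n, OF Wm] by (simp add: split_beta')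
  qed
  finally show ?thesis unfolding T0op_gW .
qed

lemma T0op_meas:
  assumes Wm: "\<And>m. Wf m \<in> borel_measurable borel"
  shows "(\<lambda>lam. T0op p q d beta ll delta MU MY Wf n lam) \<in> borel_measurable borel"
proof -
  have [measurable]: "(\<lambda>x. Wf (Suc n) (lamc d ll x delta)) \<in> borel_measurable borel"
  proof -
    have "(\<lambda>x. lamc d ll x delta) \<in> borel_measurable borel" unfolding lamc_def by measurable
    then show ?thesis by (rule measurable_compose[OF _ Wm])
  qed
  have i1: "(\<lambda>x. \<integral>\<^sup>+ u. gW Wf n (fst x) (1, snd x, u) \<partial>MU) \<in> borel_measurable (borel \<Otimes>\<^sub>M lborel)"
    by (rule sigma_finite_measure.borel_measurable_nn_integral[OF sfU])
       (use gW1_meas[where Wf=Wf and L="\<lambda>x. fst (fst x)" and M="(borel \<Otimes>\<^sub>M lborel) \<Otimes>\<^sub>M MU" and T="\<lambda>x. snd (fst x)" and U=snd and n=n, OF Wm] in \<open>simp add: split_beta'\<close>)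
  have i2: "(\<lambda>x. \<integral>\<^sup>+ u. gW Wf n (fst x) (2, snd x, u) \<partial>MY) \<in> borel_measurable (borel \<Otimes>\<^sub>M lborel)"
    by (rule sigma_finite_measure.borel_measurable_nn_integral[OF sfY])
       (use gW2_meas[where Wf=Wf and L="\<lambda>x. fst (fst x)" and M="(borel \<Otimes>\<^sub>M lborel) \<Otimes>\<^sub>M MY" and T="\<lambda>x. snd (fst x)" and U=snd and n=n, OF Wm] in \<open>simp add: split_beta'\<close>)
  have [measurable]: "(\<lambda>x. Lamc d ll (fst x) (snd x)) \<in> borel_measurable (borel \<Otimes>\<^sub>M lborel)"
    unfolding Lamc_eq[OF d] by measurable
  have [measurable]: "(\<lambda>x. Lamc d ll x delta) \<in> borel_measurable borel"
    unfolding Lamc_eq[OF d] by measurable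
  have [measurable]: "(\<lambda>x. lamc d ll (fst x) (snd x)) \<in> borel_measurable (borel \<Otimes>\<^sub>M lborel)"
    unfolding lamc_def by measurable
  have o1: "(\<lambda>lam. \<integral>\<^sup>+ t. indicator {0..delta} t *
        ennreal (lamc d ll lam t * exp (- (beta * t + Lamc d ll lam t)))
        * (\<integral>\<^sup>+ u. gW Wf n lam (1, t, u) \<partial>MU) \<partial>lborel) \<in> borel_measurable borel"
  proof (rule sigma_finite_measure.borel_measurable_nn_integral[OF sigma_finite_lborel])
    have "(\<lambda>x. indicator {0..delta} (snd x) *
        ennreal (lamc d ll (fst x) (snd x) * exp (- (beta * snd x + Lamc d ll (fst x) (snd x))))
        * (\<integral>\<^sup>+ u. gW Wf n (fst x) (1, snd x, u) \<partial>MU)) \<in> borel_measurable (borel \<Otimes>\<^sub>M lborel)"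
      using i1 by measurable
    then show "(\<lambda>(lam, t). indicator {0..delta} t *
        ennreal (lamc d ll lam t * exp (- (beta * t + Lamc d ll lam t)))
        * (\<integral>\<^sup>+ u. gW Wf n lam (1, t, u) \<partial>MU)) \<in> borel_measurable (borel \<Otimes>\<^sub>M lborel)"
      by (simp add: split_beta')
  qed
  have o2: "(\<lambda>lam. \<integral>\<^sup>+ t. indicator {0..delta} t *
        ennreal (beta * exp (- (beta * t + Lamc d ll lam t)))
        * (\<integral>\<^sup>+ u. gW Wf n lam (2, t, u) \<partial>MY) \<partial>lborel) \<in> borel_measurable borel"
  proof (rule sigma_finite_measure.borel_measurable_nn_integral[OF sigma_finite_lborel])
    have "(\<lambda>x. indicator {0..delta} (snd x) *
        ennreal (beta * exp (- (beta * snd x + Lamc d ll (fst x) (snd x))))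
        * (\<integral>\<^sup>+ u. gW Wf n (fst x) (2, snd x, u) \<partial>MY)) \<in> borel_measurable (borel \<Otimes>\<^sub>M lborel)"
      using i2 by measurable
    then show "(\<lambda>(lam, t). indicator {0..delta} t *
        ennreal (beta * exp (- (beta * t + Lamc d ll lam t)))
        * (\<integral>\<^sup>+ u. gW Wf n lam (2, t, u) \<partial>MY)) \<in> borel_measurable (borel \<Otimes>\<^sub>M lborel)"
      by (simp add: split_beta')
  qed
  show ?thesis unfolding T0op_gW Estep_def gW_0 using o1 o2 by measurable
qed

lemma Top_meas:
  assumes Wm: "\<And>m. Wf m \<in> borel_measurable borel"
  shows "(\<lambda>lam. Top p q d beta ll delta MU MY Wf n lam) \<in> borel_measurable borel"
proof -
  note [measurable] = T0op_meas[where n=n, OF Wm] Wm[of "n - 1"]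
  show ?thesis unfolding Top_def T1op_def TFop_def by measurable
qed

end
end

definition ap :: "nat \<Rightarrow> ennreal \<Rightarrow> ennreal" where
  "ap k x = (if x = \<top> then of_nat k else x * ennreal (1 - 1 / (real k + 2)))"

lemma ap_meas: assumes [measurable]: "f \<in> borel_measurable M" shows "(\<lambda>x. ap k (f x)) \<in> borel_measurable M"
  unfolding ap_def by measurable

lemma c_inc: "incseq (\<lambda>k. ennreal (1 - 1 / (real k + 2)))"
  unfolding incseq_def by (auto intro!: ennreal_leI simp: field_simps)

lemma ap_inc: "incseq (\<lambda>k. ap k x)"
  using c_inc unfolding ap_def incseq_def by (auto intro: mult_left_mono)

lemma c_SUP: "(SUP k. ennreal (1 - 1 / (real k + 2))) = 1"
proof -
  have "(\<lambda>k. 1 / real (k + 2)) \<longlonglongrightarrow> 0"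
    using LIMSEQ_ignore_initial_segment[OF lim_1_over_n, of 2] by simp
  then have "(\<lambda>k. 1 / (real k + 2)) \<longlonglongrightarrow> 0" by (simp add: add.commute)
  then have "(\<lambda>k. 1 - 1 / (real k + 2)) \<longlonglongrightarrow> 1 - 0" by (intro tendsto_intros)
  then have "(\<lambda>k. ennreal (1 - 1 / (real k + 2))) \<longlonglongrightarrow> ennreal 1" by (intro tendsto_ennrealI) simp
  from LIMSEQ_unique[OF LIMSEQ_SUP[OF c_inc] this] show ?thesis by simp
qed

lemma ap_SUP: "(SUP k. ap k x) = x"
proof (cases "x = \<top>")
  case True
  then show ?thesis unfolding ap_def using ennreal_SUP_of_nat_eq_top by simp
next
  case False
  then have "(SUP k. ap k x) = (SUP k. x * ennreal (1 - 1 / (real k + 2)))" unfolding ap_def by simp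
  also have "\<dots> = x * (SUP k. ennreal (1 - 1 / (real k + 2)))" by (simp add: SUP_mult_left_ennreal)
  finally show ?thesis by (simp add: c_SUP)
qed

lemma ap_lt: "ap k x < x \<or> ap k x = 0"
proof (cases "x = \<top>")
  case True then show ?thesis unfolding ap_def by (simp add: of_nat_less_top)
next
  case False
  then obtain r where r: "x = ennreal r" "0 \<le> r" by (cases x) auto
  show ?thesis
  proof (cases "r = 0")
    case True then show ?thesis using r unfolding ap_def by simp
  next
    case False
    then have rp: "r > 0" using r by simp
    have c: "0 \<le> 1 - 1 / (real k + 2)" by (simp add: field_simps)
    have "ap k x = ennreal (r * (1 - 1 / (real k + 2)))"
      unfolding ap_def using r c by (simp add: ennreal_mult)
    moreover have "r * (1 - 1 / (real k + 2)) < r" using rp by (simp add: field_simps)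
    ultimately show ?thesis using r rp c by (simp add: ennreal_lessI)
  qed
qed

context fixes p q d beta ll delta :: real and MU MY :: "real measure"
begin

abbreviation "JJ \<equiv> Jval p q d beta ll delta MU MY"
abbreviation "AA \<equiv> adm p d ll delta"
abbreviation "Wl \<equiv> Vdelta_l p q d beta ll delta MU MY"
abbreviation "VV \<equiv> Vdelta p q d beta ll delta MU MY"
abbreviation "TT \<equiv> Top p q d beta ll delta MU MY"
abbreviation "T0 \<equiv> T0op p q d beta ll delta MU MY"

lemma adm_allEF: "AA stp l (\<lambda>h. EF) s"
  by (cases l; cases s) (auto simp: AD_Suc)

lemma Wl_def': "Wl l n lam = (SUP pol\<in>{pol. AA False l pol (Some (n, lam))}. JJ l pol (Some (n, lam)))"
  unfolding Vdelta_l_def ..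

lemma Wl_0: "Wl 0 n lam = 0" unfolding Wl_def' by simp

lemma T0_le_Top: "T0 Wf n lam \<le> TT Wf n lam"
  unfolding Top_def by (auto simp: le_max_iff_disj)
lemma TF_le_Top: "TFop p delta n \<le> TT Wf n lam"
  unfolding Top_def by (auto simp: le_max_iff_disj)
lemma T1_le_Top: "n \<noteq> 0 \<Longrightarrow> T1op p delta Wf n lam \<le> TT Wf n lam"
  unfolding Top_def by (auto simp: le_max_iff_disj)

lemma Bellman_le: "Wl (Suc l) n lam \<le> TT (Wl l) n lam"
  unfolding Wl_def'[of "Suc l"]
proof (rule SUP_least)
  fix pol assume "pol \<in> {pol. AA False (Suc l) pol (Some (n, lam))}"
  then have a: "AA False (Suc l) pol (Some (n, lam))" by simp
  show "JJ (Suc l) pol (Some (n, lam)) \<le> TT (Wl l) n lam"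
  proof (cases "pol []")
    case E0
    with a have a0: "\<forall>ob. AA False l (\<lambda>h. pol (ob # h)) (next0 p d ll delta n lam ob)"
      by (simp add: AD_Suc)
    have "JJ (Suc l) pol (Some (n, lam)) \<le> T0 (Wl l) n lam"
      unfolding J_Suc E0 action.case T0op_def
    proof (intro Estep_mono mult_left_mono add_left_mono)
      fix ob
      show "JJ l (\<lambda>h. pol (ob # h)) (next0 p d ll delta n lam ob)
           \<le> (case next0 p d ll delta n lam ob of None \<Rightarrow> 0 | Some (m, la) \<Rightarrow> Wl l m la)"
      proof (cases "next0 p d ll delta n lam ob")
        case (Some a)
        then obtain m la where e: "next0 p d ll delta n lam ob = Some (m, la)" by (cases a) auto
        show ?thesis unfolding e Wl_def' using a0[rule_format, of ob] e
          by (auto intro!: SUP_upper)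
      qed simp
    qed simp
    then show ?thesis using T0_le_Top order_trans by blast
  next
    case E1
    with a have n: "1 \<le> n" and a1: "AA False l (\<lambda>h. pol (dummy_obs # h)) (Some (n - 1, lam))"
      by (simp_all add: AD_Suc)
    have "JJ (Suc l) pol (Some (n, lam)) \<le> T1op p delta (Wl l) n lam"
      unfolding J_Suc E1 action.case T1op_def using n a1
      by (auto simp: mult.commute Wl_def' intro!: add_left_mono SUP_upper)
    then show ?thesis using T1_le_Top[of n] n order_trans by fastforce
  next
    case EF
    then have "JJ (Suc l) pol (Some (n, lam)) = TFop p delta n" by (simp add: J_Suc TFop_def)
    then show ?thesis using TF_le_Top by simp
  next
    case Stop
    with a show ?thesis by (simp add: AD_Suc)
  qed
qed

lemma TF_le_W: "TFop p delta n \<le> Wl (Suc l) n lam"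
  unfolding Wl_def'
  by (rule SUP_upper2[of "\<lambda>h. EF"]) (auto simp: AD_Suc J_Suc TFop_def)

lemma T1_le_W:
  assumes n: "n \<noteq> 0" shows "T1op p delta (Wl l) n lam \<le> Wl (Suc l) n lam"
proof -
  have ne: "{pol. AA False l pol (Some (n - 1, lam))} \<noteq> {}" using adm_allEF by blast
  have "T1op p delta (Wl l) n lam = (SUP pol\<in>{pol. AA False l pol (Some (n - 1, lam))}. JJ l pol (Some (n - 1, lam)) + ennreal (delta * p))"
    unfolding T1op_def Wl_def' by (rule ennreal_SUP_add_left[OF ne, symmetric])
  also have "\<dots> \<le> Wl (Suc l) n lam"
  proof (rule SUP_least)
    fix pol' assume "pol' \<in> {pol. AA False l pol (Some (n - 1, lam))}"
    then have a: "AA False l pol' (Some (n - 1, lam))" by simp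
    define pol :: policy where "pol = (\<lambda>h. case h of [] \<Rightarrow> E1 | _ # h' \<Rightarrow> pol' h')"
    have sh: "(\<lambda>h. pol (dummy_obs # h)) = pol'" unfolding pol_def by simp
    have p0: "pol [] = E1" unfolding pol_def by simp
    have ad: "AA False (Suc l) pol (Some (n, lam))" using a n by (simp add: AD_Suc p0 sh)
    have "JJ l pol' (Some (n - 1, lam)) + ennreal (delta * p) = JJ (Suc l) pol (Some (n, lam))"
      using n by (simp add: J_Suc p0 sh mult.commute add.commute)
    also have "\<dots> \<le> Wl (Suc l) n lam" unfolding Wl_def' by (rule SUP_upper) (simp add: ad)
    finally show "JJ l pol' (Some (n - 1, lam)) + ennreal (delta * p) \<le> Wl (Suc l) n lam" .
  qed
  finally show ?thesis .
qed

context
  assumes d: "d > 0" and MU: "prob_space MU" "sets MU = sets borel"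
    and MY: "prob_space MY" "sets MY = sets borel"
begin

lemma T0_le_W:
  assumes Wm: "\<And>m. Wl l m \<in> borel_measurable borel"
  shows "T0 (Wl l) n lam \<le> Wl (Suc l) n lam"
proof -
  define Wk where "Wk k m la = ap k (Wl l m la)" for k m la
  have step: "T0 (Wk k) n lam \<le> Wl (Suc l) n lam" for k
  proof -
    have "\<exists>pol. AA False l pol (Some (m, la)) \<and> Wk k m la \<le> JJ l pol (Some (m, la))" for m la
    proof (cases "ap k (Wl l m la) = 0")
      case True then show ?thesis unfolding Wk_def using adm_allEF by auto
    next
      case False
      then have "ap k (Wl l m la) < Wl l m la" using ap_lt by blast
      then obtain pol where "pol \<in> {pol. AA False l pol (Some (m, la))}" "ap k (Wl l m la) < JJ l pol (Some (m, la))"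
        unfolding Wl_def'[of l m la] less_SUP_iff by blast
      then show ?thesis unfolding Wk_def by (auto intro: less_imp_le)
    qed
    then obtain sel where sel: "\<And>m la. AA False l (sel m la) (Some (m, la)) \<and> Wk k m la \<le> JJ l (sel m la) (Some (m, la))"
      by metis
    define P where "P ob = (case next0 p d ll delta n lam ob of None \<Rightarrow> (\<lambda>h. EF) | Some ml \<Rightarrow> sel (fst ml) (snd ml))" for ob
    define pol :: policy where "pol = (\<lambda>h. case h of [] \<Rightarrow> E0 | ob # h' \<Rightarrow> P ob h')"
    have sh: "(\<lambda>h. pol (ob # h)) = P ob" for ob unfolding pol_def by simp
    have p0: "pol [] = E0" unfolding pol_def by simp
    have ad: "AA False (Suc l) pol (Some (n, lam))"
      unfolding AD_Suc p0 action.case sh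
    proof
      fix ob show "AA False l (P ob) (next0 p d ll delta n lam ob)"
        unfolding P_def using sel by (cases "next0 p d ll delta n lam ob") auto
    qed
    have "T0 (Wk k) n lam \<le> JJ (Suc l) pol (Some (n, lam))"
      unfolding J_Suc p0 action.case sh T0op_def
    proof (intro Estep_mono mult_left_mono add_left_mono)
      fix ob
      show "(case next0 p d ll delta n lam ob of None \<Rightarrow> 0 | Some (m, la) \<Rightarrow> Wk k m la)
         \<le> JJ l (P ob) (next0 p d ll delta n lam ob)"
        unfolding P_def using sel by (cases "next0 p d ll delta n lam ob") auto
    qed simp
    also have "\<dots> \<le> Wl (Suc l) n lam" unfolding Wl_def'[of "Suc l"] by (rule SUP_upper) (simp add: ad)
    finally show ?thesis .
  qed
  have "T0 (Wl l) n lam = T0 (\<lambda>m la. SUP k. Wk k m la) n lam"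
    unfolding Wk_def ap_SUP ..
  also have "\<dots> = (SUP k. T0 (Wk k) n lam)"
    by (rule T0op_SUP[OF d MU MY]) (auto simp: Wk_def ap_inc intro!: ap_meas Wm)
  also have "\<dots> \<le> Wl (Suc l) n lam" by (rule SUP_least) (rule step)
  finally show ?thesis .
qed

lemma Bellman_ge:
  assumes Wm: "\<And>m. Wl l m \<in> borel_measurable borel"
  shows "TT (Wl l) n lam \<le> Wl (Suc l) n lam"
  unfolding Top_def using T0_le_W[OF Wm] T1_le_W TF_le_W by auto

lemma W_meas: "Wl l m \<in> borel_measurable borel"
proof (induction l arbitrary: m)
  case 0 then show ?case by (simp add: Wl_0)
next
  case (Suc l)
  have "Wl (Suc l) m = (\<lambda>lam. TT (Wl l) m lam)"
    using Bellman_le Bellman_ge[OF Suc.IH] by (intro ext antisym)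
  then show ?case using Top_meas[OF d MU MY Suc.IH] by simp
qed

lemma Bellman: "Wl (Suc l) n lam = TT (Wl l) n lam"
  using Bellman_le Bellman_ge[OF W_meas] by (intro antisym)

lemma fixpoint: "TT VV n lam = VV n lam"
proof (rule antisym)
  have Veq: "VV = (\<lambda>m la. SUP l. Wl l m la)" using V_eq_SUPW by (intro ext) blast
  have WV: "TT (Wl l) n lam \<le> VV n lam" for l
    using Bellman[of l n lam] W_le_V[of p q d beta ll delta MU MY "Suc l" n lam] by simp
  have a: "T0 VV n lam \<le> VV n lam"
  proof -
    have "T0 VV n lam = (SUP l. T0 (Wl l) n lam)"
      unfolding Veq by (rule T0op_SUP[OF d MU MY]) (auto intro: W_meas W_incseq)
    also have "\<dots> \<le> VV n lam" using T0_le_Top WV order_trans by (blast intro: SUP_least)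
    finally show ?thesis .
  qed
  have b: "T1op p delta VV n lam \<le> VV n lam" if n: "n \<noteq> 0"
  proof -
    have "T1op p delta VV n lam = (SUP l. Wl l (n - 1) lam + ennreal (delta * p))"
      unfolding T1op_def Veq by (simp add: ennreal_SUP_add_left)
    also have "\<dots> \<le> VV n lam"
    proof (rule SUP_least)
      fix l
      have "Wl l (n - 1) lam + ennreal (delta * p) = T1op p delta (Wl l) n lam" unfolding T1op_def ..
      also have "\<dots> \<le> TT (Wl l) n lam" by (rule T1_le_Top[OF n])
      also have "\<dots> \<le> VV n lam" by (rule WV)
      finally show "Wl l (n - 1) lam + ennreal (delta * p) \<le> VV n lam" .
    qed
    finally show ?thesis .
  qed
  have c: "TFop p delta n \<le> VV n lam" using TF_le_Top WV[of 0] order_trans by blast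
  show "TT VV n lam \<le> VV n lam" unfolding Top_def using a b c by auto
next
  have "Wl l n lam \<le> TT VV n lam" for l
  proof (cases l)
    case 0 then show ?thesis by (simp add: Wl_0)
  next
    case (Suc k)
    have "Wl (Suc k) n lam = TT (Wl k) n lam" by (rule Bellman)
    also have "\<dots> \<le> TT VV n lam" by (rule Top_mono) (rule W_le_V)
    finally show ?thesis using Suc by simp
  qed
  then show "VV n lam \<le> TT VV n lam" unfolding V_eq_SUPW by (rule SUP_least)
qed

end
end

theorem proposition6p4:
  fixes p q d beta ll delta :: real and MU MY :: "real measure"
  assumes "p > 0" "q > 0" "d > 0" "beta > 0" "ll \<ge> 0" "delta > 0"
    and "prob_space MU" "sets MU = sets borel" "AE u in MU. u > 0" "integrable MU (\<lambda>u. u)"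
    and "prob_space MY" "sets MY = sets borel" "AE y in MY. y > 0" "integrable MY (\<lambda>y. y)"
    and "\<exists>eta > 0. p = (1 + eta) * (\<integral>u. u \<partial>MU) * (ll + beta * (\<integral>y. y \<partial>MY) / d)"
  shows "(\<forall>n lam. ll \<le> lam \<longrightarrow>
            (\<lambda>l. Vdelta_l p q d beta ll delta MU MY l n lam)
              \<longlonglongrightarrow> Vdelta p q d beta ll delta MU MY n lam)
       \<and> (\<forall>n lam. ll \<le> lam \<longrightarrow>
            Top p q d beta ll delta MU MY (Vdelta p q d beta ll delta MU MY) n lam
              = Vdelta p q d beta ll delta MU MY n lam)"
proof (intro conjI allI impI)
  fix n lam
  show "(\<lambda>l. Vdelta_l p q d beta ll delta MU MY l n lam) \<longlonglongrightarrow> Vdelta p q d beta ll delta MU MY n lam"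
    by (rule claim1)
  show "Top p q d beta ll delta MU MY (Vdelta p q d beta ll delta MU MY) n lam = Vdelta p q d beta ll delta MU MY n lam"
    by (rule fixpoint) (use assms in auto)
qed

end
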